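(* Structural embeddings with $\mathrm{LPE}$ as node-level positional encoding are sufficiently node- and adjacency-identifying.
   Context: Graphs $G$ are finite, undirected, without self-loops and without isolated nodes, with $n$ nodes, adjacency matrix $\mathbf{A}(G)$ and degree matrix $\mathbf{D}$. The graph Laplacian is $\mathbf{L}=\mathbf{D}-\mathbf{A}(G)$ (the normalized Laplacian $\mathbf{D}^{-1/2}\mathbf{L}\mathbf{D}^{-1/2}$ may be used instead). Let $\lambda=(\lambda_1,\dots,\lambda_l)^T$ be the $l$ smallest (possibly repeated) eigenvalues and $\mathbf{V}\in\mathbb{R}^{n\times l}$ have as $j$-th column an eigenvector for $\lambda_j$ (orthonormal). $\mathrm{LPE}(\mathbf{V},\lambda)=\rho\big([\phi(\mathbf{V}^T_1,\lambda+\epsilon)\cdots\phi(\mathbf{V}^T_n,\lambda+\epsilon)]\big)$, where $\epsilon\in\mathbb{R}^l$ is a learnable zero-initialized vector, $\phi\colon\mathbb{R}^2\to\mathbb{R}^d$ is an FFN applied to each pair $(\mathbf{V}_{ij},\lambda_j+\epsilon_j)$, and $\rho\colon\mathbb{R}^{l\times d}\to\mathbb{R}^d$ is a permutation-equivariant network applied per node (e.g. sum over the $l$ entries followed by an FFN), giving a vector $\mathrm{emb}_{PE}(v)$ for each node $v$. Structural embeddings: $\mathbf{P}(v)=\mathsf{FFN}(\mathrm{emb}_{\deg}(v)+\mathrm{emb}_{PE}(v))$, with $\mathrm{emb}_{\deg}$ a learnable embedding of the node degree and $\mathsf{FFN}$ an MLP; all networks and dimensions are parameters. For $\mathbf{P}\in\mathbb{R}^{n\times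 d}$ and $\mathbf{W}^Q,\mathbf{W}^K\in\mathbb{R}^{d\times d}$ let $\tilde{\mathbf{P}}=\frac{1}{\sqrt{d_k}}\mathbf{P}\mathbf{W}^Q(\mathbf{P}\mathbf{W}^K)^T$ ($d_k>0$ fixed). $\mathbf{P}$ is node-identifying if for some $\mathbf{W}^Q,\mathbf{W}^K$: $\tilde{\mathbf{P}}_{ij}=\max_k\tilde{\mathbf{P}}_{ik}\iff i=j$; adjacency-identifying if for some $\mathbf{W}^Q,\mathbf{W}^K$: $\tilde{\mathbf{P}}_{ij}=\max_k\tilde{\mathbf{P}}_{ik}\iff\mathbf{A}(G)_{ij}=1$. Parametrized structural embeddings are sufficiently node-identifying (resp. adjacency-identifying) if there is a node-identifying (resp. adjacency-identifying) matrix $\mathbf{P}$ such that for every $\varepsilon>0$ some parameter choice yields embeddings $\mathbf{Q}$ with $\|\mathbf{P}-\mathbf{Q}\|_F<\varepsilon$. *)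

theory Defs
  imports Complex_Main
begin

definition simple_graph_no_isolated :: "nat \<Rightarrow> (nat \<Rightarrow> nat \<Rightarrow> bool) \<Rightarrow> bool" where
  "simple_graph_no_isolated n E \<longleftrightarrow>
     (\<forall>i<n. \<forall>j<n. E i j \<longleftrightarrow> E j i) \<and>
     (\<forall>i<n. \<not> E i i) \<and>
     (\<forall>i<n. \<exists>j<n. E i j)"

definition adj :: "(nat \<Rightarrow> nat \<Rightarrow> bool) \<Rightarrow> nat \<Rightarrow> nat \<Rightarrow> real" where
  "adj E i j = (if E i j then 1 else 0)"

definition deg :: "nat \<Rightarrow> (nat \<Rightarrow> nat \<Rightarrow> bool) \<Rightarrow> nat \<Rightarrow> nat" where
  "deg n E v = card {u. u < n \<and> E v u}"

definition laplacian :: "nat \<Rightarrow> (nat \<Rightarrow> nat \<Rightarrow> bool) \<Rightarrow> nat \<Rightarrow> nat \<Rightarrow> real" where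
  "laplacian n E i j = (if i = j then real (deg n E i) else 0) - adj E i j"

text \<open>V (n x n, column j = eigenvector for lam j) is an orthonormal eigenbasis of the
  Laplacian with eigenvalues listed in nondecreasing order (the l = n smallest eigenvalues,
  with multiplicity).\<close>
definition laplacian_eigendecomp ::
  "nat \<Rightarrow> (nat \<Rightarrow> nat \<Rightarrow> bool) \<Rightarrow> (nat \<Rightarrow> nat \<Rightarrow> real) \<Rightarrow> (nat \<Rightarrow> real) \<Rightarrow> bool" where
  "laplacian_eigendecomp n E V lam \<longleftrightarrow>
     (\<forall>i<n. \<forall>j<n. (\<Sum>k<n. laplacian n E i k * V k j) = lam j * V i j) \<and>
     (\<forall>j<n. \<forall>k<n. (\<Sum>i<n. V i j * V i k) = (if j = k then 1 else 0)) \<and>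
     (\<forall>j k. j \<le> k \<and> k < n \<longrightarrow> lam j \<le> lam k)"

definition relu :: "real \<Rightarrow> real" where
  "relu x = max 0 x"

type_synonym layer = "real list list \<times> real list"

definition affine :: "layer \<Rightarrow> real list \<Rightarrow> real list" where
  "affine L x = map (\<lambda>(row, c). sum_list (map2 (*) row x) + c) (zip (fst L) (snd L))"

fun mlp :: "layer list \<Rightarrow> real list \<Rightarrow> real list" where
  "mlp [] x = x"
| "mlp [L] x = affine L x"
| "mlp (L # L' # Ls) x = mlp (L' # Ls) (map relu (affine L x))"

fun mlp_dims :: "layer list \<Rightarrow> nat \<Rightarrow> nat \<Rightarrow> bool" where
  "mlp_dims [] a b = (a = b)"
| "mlp_dims (L # Ls) a b =
     (length (snd L) = length (fst L) \<and> (\<forall>row \<in> set (fst L). length row = a) \<and>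
      mlp_dims Ls (length (fst L)) b)"

definition ffn :: "nat \<Rightarrow> nat \<Rightarrow> layer list \<Rightarrow> bool" where
  "ffn a b Ls \<longleftrightarrow> Ls \<noteq> [] \<and> mlp_dims Ls a b"

text \<open>LPE(V, lam) at node i: rho applied to the n x dphi matrix of rows
  phi(V i j, lam j + eps j); rho = sum over the rows followed by an FFN.\<close>
definition lpe ::
  "nat \<Rightarrow> (nat \<Rightarrow> nat \<Rightarrow> real) \<Rightarrow> (nat \<Rightarrow> real) \<Rightarrow>
   layer list \<Rightarrow> nat \<Rightarrow> (nat \<Rightarrow> real) \<Rightarrow> layer list \<Rightarrow> nat \<Rightarrow> real list" where
  "lpe n V lam phi dphi eps rho i =
     mlp rho (map (\<lambda>k. \<Sum>j<n. mlp phi [V i j, lam j + eps j] ! k) [0..<dphi])"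

definition struct_emb ::
  "nat \<Rightarrow> (nat \<Rightarrow> nat \<Rightarrow> bool) \<Rightarrow> (nat \<Rightarrow> nat \<Rightarrow> real) \<Rightarrow> (nat \<Rightarrow> real) \<Rightarrow>
   layer list \<Rightarrow> nat \<Rightarrow> (nat \<Rightarrow> real) \<Rightarrow> layer list \<Rightarrow> (nat \<Rightarrow> real list) \<Rightarrow> layer list \<Rightarrow>
   nat \<Rightarrow> real list" where
  "struct_emb n E V lam phi dphi eps rho emb_deg F v =
     mlp F (map2 (+) (emb_deg (deg n E v)) (lpe n V lam phi dphi eps rho v))"

definition lpe_params_ok ::
  "nat \<Rightarrow> layer list \<Rightarrow> nat \<Rightarrow> layer list \<Rightarrow> nat \<Rightarrow> (nat \<Rightarrow> real list) \<Rightarrow> layer list \<Rightarrow> bool" where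
  "lpe_params_ok d phi dphi rho de emb_deg F \<longleftrightarrow>
     ffn 2 dphi phi \<and> ffn dphi de rho \<and> (\<forall>m. length (emb_deg m) = de) \<and> ffn de d F"

text \<open>Rows P v (v < n) of length d form the matrix P in R^{n x d}.\<close>
definition attn_scores ::
  "nat \<Rightarrow> real \<Rightarrow> (nat \<Rightarrow> real list) \<Rightarrow> (nat \<Rightarrow> nat \<Rightarrow> real) \<Rightarrow> (nat \<Rightarrow> nat \<Rightarrow> real) \<Rightarrow>
   nat \<Rightarrow> nat \<Rightarrow> real" where
  "attn_scores d dk P WQ WK i j =
     (1 / sqrt dk) * (\<Sum>a<d. (\<Sum>b<d. P i ! b * WQ b a) * (\<Sum>b<d. P j ! b * WK b a))"

definition node_identifying :: "nat \<Rightarrow> nat \<Rightarrow> real \<Rightarrow> (nat \<Rightarrow> real list) \<Rightarrow> bool" where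
  "node_identifying n d dk P \<longleftrightarrow>
     (\<exists>WQ WK. \<forall>i<n. \<forall>j<n.
        attn_scores d dk P WQ WK i j = (MAX k\<in>{..<n}. attn_scores d dk P WQ WK i k) \<longleftrightarrow> i = j)"

definition adjacency_identifying ::
  "nat \<Rightarrow> (nat \<Rightarrow> nat \<Rightarrow> bool) \<Rightarrow> nat \<Rightarrow> real \<Rightarrow> (nat \<Rightarrow> real list) \<Rightarrow> bool" where
  "adjacency_identifying n E d dk P \<longleftrightarrow>
     (\<exists>WQ WK. \<forall>i<n. \<forall>j<n.
        attn_scores d dk P WQ WK i j = (MAX k\<in>{..<n}. attn_scores d dk P WQ WK i k) \<longleftrightarrow>
        adj E i j = 1)"

definition frob_dist :: "nat \<Rightarrow> nat \<Rightarrow> (nat \<Rightarrow> real list) \<Rightarrow> (nat \<Rightarrow> real list) \<Rightarrow> real" where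
  "frob_dist n d P Q = sqrt (\<Sum>i<n. \<Sum>k<d. (P i ! k - Q i ! k)^2)"

definition sufficiently_identifying_lpe ::
  "(nat \<Rightarrow> (nat \<Rightarrow> real list) \<Rightarrow> bool) \<Rightarrow> nat \<Rightarrow> (nat \<Rightarrow> nat \<Rightarrow> bool) \<Rightarrow>
   (nat \<Rightarrow> nat \<Rightarrow> real) \<Rightarrow> (nat \<Rightarrow> real) \<Rightarrow> bool" where
  "sufficiently_identifying_lpe Ident n E V lam \<longleftrightarrow>
     (\<exists>d P. (\<forall>i<n. length (P i) = d) \<and> Ident d P \<and>
        (\<forall>\<epsilon>>0. \<exists>phi dphi eps rho de emb_deg F.
           lpe_params_ok d phi dphi rho de emb_deg F \<and>
           frob_dist n d P (struct_emb n E V lam phi dphi eps rho emb_deg F) < \<epsilon>))"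

end

theory Submission imports Defs "Jordan_Normal_Form.Determinant" begin

definition mkL :: "nat \<Rightarrow> nat \<Rightarrow> (nat \<Rightarrow> nat \<Rightarrow> real) \<Rightarrow> (nat \<Rightarrow> real) \<Rightarrow> layer" where
  "mkL m a W b = (map (\<lambda>r. map (\<lambda>c. W r c) [0..<a]) [0..<m], map b [0..<m])"

lemma affine_mkL:
  assumes "length x = a"
  shows "affine (mkL m a W b) x = map (\<lambda>r. (\<Sum>c<a. W r c * x!c) + b r) [0..<m]"
proof -
  have z: "zip (map (\<lambda>r. map (W r) [0..<a]) [0..<m]) (map b [0..<m])
        = map (\<lambda>r. (map (W r) [0..<a], b r)) [0..<m]"
    by (rule nth_equalityI) auto
  have s: "sum_list (map2 (*) (map (W r) [0..<a]) x) = (\<Sum>c<a. W r c * x!c)" for r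
  proof -
    have "map2 (*) (map (W r) [0..<a]) x = map (\<lambda>c. W r c * x!c) [0..<a]"
      using assms by (intro nth_equalityI) auto
    then show ?thesis by (simp add: sum_list_sum_nth atLeast0LessThan)
  qed
  show ?thesis unfolding affine_def mkL_def fst_conv snd_conv z
    by (simp add: s)
qed

lemma mlp_dims_mkL: "mlp_dims (mkL m a W b # Ls) a c = mlp_dims Ls m c"
  by (simp add: mkL_def)

lemma delta_mult: "(if P then (c::real) else 0) * y = (if P then c * y else 0)" by simp

definition idL :: "nat \<Rightarrow> layer" where
  "idL m = mkL m m (\<lambda>r c. if r = c then 1 else 0) (\<lambda>_. 0)"

lemma affine_idL: "length x = m \<Longrightarrow> affine (idL m) x = x"
  unfolding idL_def
  by (subst affine_mkL) (auto intro!: nth_equalityI simp: delta_mult)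

definition W1 :: "nat \<Rightarrow> nat \<Rightarrow> nat \<Rightarrow> real" where
  "W1 n r c = (if r = 0 then (if c = 0 then 1 else 0) else if r = 1 then (if c = 0 then -1 else 0)
     else if r < 2 + n then (if c = 1 then 1 else 0) else (if c = 1 then -1 else 0))"
definition b1 :: "nat \<Rightarrow> nat \<Rightarrow> real" where
  "b1 n r = (if r < 2 then 0 else if r < 2 + n then - real (r - 2) else real (r - 2 - n))"
definition h1 :: "nat \<Rightarrow> real \<Rightarrow> real \<Rightarrow> nat \<Rightarrow> real" where
  "h1 n x t r = (if r = 0 then relu x else if r = 1 then relu (-x)
     else if r < 2 + n then relu (t - real (r - 2)) else relu (real (r - 2 - n) - t))"

lemma layer1: "map relu (affine (mkL (2+2*n) 2 (W1 n) (b1 n)) [x, t]) = map (h1 n x t) [0..<2+2*n]"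
  apply (subst affine_mkL) apply simp
  apply (auto intro!: nth_equalityI simp: W1_def b1_def h1_def numeral_2_eq_2 lessThan_Suc)
  apply (simp add: algebra_simps)
  done

definition sg :: "nat \<Rightarrow> nat \<Rightarrow> real" where "sg n r = (if r < n then 1 else -1)"
definition kk :: "nat \<Rightarrow> nat \<Rightarrow> nat" where "kk n r = (if r < n then r else r - n)"

lemma kk_lt: "r < 2 * n \<Longrightarrow> kk n r < n" by (auto simp add: kk_def)

lemma delta1: "p < (N::nat) \<Longrightarrow> (\<Sum>c<N. if c = p then g c else (0::real)) = g p"
  by (subst sum.delta) auto

lemma sum4: "p0 < (N::nat) \<Longrightarrow> p1 < N \<Longrightarrow> p2 < N \<Longrightarrow> p3 < N \<Longrightarrow>
  (\<Sum>c<N. ((if c = p0 then a0 else 0) - (if c = p1 then a1 else 0) - (if c = p2 then a2 else 0)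
     - (if c = p3 then a3 else 0)) * (f c::real)) = a0 * f p0 - a1 * f p1 - a2 * f p2 - a3 * f p3"
  by (simp add: left_diff_distrib sum_subtractf delta_mult delta1)

definition W2 :: "nat \<Rightarrow> nat \<Rightarrow> nat \<Rightarrow> real" where
  "W2 n r c = (if c = 0 then sg n r else 0) - (if c = 1 then sg n r else 0)
     - (if c = 2 + kk n r then 2 else 0) - (if c = 2 + n + kk n r then 2 else 0)"

definition g2 :: "nat \<Rightarrow> real \<Rightarrow> real \<Rightarrow> nat \<Rightarrow> real" where
  "g2 n x t r = relu (sg n r * x - 2 * relu (t - real (kk n r)) - 2 * relu (real (kk n r) - t))"

lemma relu_diff: "relu x - relu (-x) = x" by (simp add: relu_def max_def)

lemma layer2_entry:
  assumes r: "r < 2 * n"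
  shows "(\<Sum>c<2 + 2 * n. W2 n r c * map (h1 n x t) [0..<2 + 2 * n] ! c)
     = sg n r * x - 2 * relu (t - real (kk n r)) - 2 * relu (real (kk n r) - t)"
proof -
  have "(\<Sum>c<2 + 2 * n. W2 n r c * map (h1 n x t) [0..<2 + 2 * n] ! c)
     = (\<Sum>c<2 + 2 * n. W2 n r c * h1 n x t c)"
    by (intro sum.cong) (auto simp del: upt_Suc)
  also have "... = sg n r * h1 n x t 0 - sg n r * h1 n x t 1 - 2 * h1 n x t (2 + kk n r) - 2 * h1 n x t (2 + n + kk n r)"
    unfolding W2_def using r kk_lt[OF r] by (intro sum4) auto
  also have "... = sg n r * x - 2 * relu (t - real (kk n r)) - 2 * relu (real (kk n r) - t)"
    using r by (auto simp add: h1_def kk_def relu_diff right_diff_distrib[symmetric])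
  finally show ?thesis .
qed

lemma layer2: "map relu (affine (mkL (2*n) (2+2*n) (W2 n) (\<lambda>_. 0)) (map (h1 n x t) [0..<2+2*n]))
   = map (g2 n x t) [0..<2*n]"
  apply (subst affine_mkL)
   apply simp
  apply (rule nth_equalityI)
   apply simp
  apply (simp only: length_map length_upt nth_map nth_upt)
  apply (simp only: layer2_entry g2_def)
  apply simp
  done

definition W3 :: "nat \<Rightarrow> nat \<Rightarrow> nat \<Rightarrow> real" where
  "W3 n r c = (if c = r then 1 else 0) - (if c = n + r then 1 else 0)"

lemma sum2: "p0 < (N::nat) \<Longrightarrow> p1 < N \<Longrightarrow>
  (\<Sum>c<N. ((if c = p0 then a0 else 0) - (if c = p1 then a1 else 0)) * (f c::real)) = a0 * f p0 - a1 * f p1"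
  by (simp add: left_diff_distrib sum_subtractf delta_mult delta1)

lemma layer3_entry:
  assumes r: "r < n"
  shows "(\<Sum>c<2 * n. W3 n r c * map (g2 n x t) [0..<2 * n] ! c) = g2 n x t r - g2 n x t (n + r)"
proof -
  have "(\<Sum>c<2 * n. W3 n r c * map (g2 n x t) [0..<2 * n] ! c) = (\<Sum>c<2 * n. W3 n r c * g2 n x t c)"
    by (intro sum.cong) (auto simp del: upt_Suc)
  also have "... = g2 n x t r - g2 n x t (n + r)"
    unfolding W3_def using r by (subst sum2) auto
  finally show ?thesis .
qed

lemma layer3: "affine (mkL n (2*n) (W3 n) (\<lambda>_. 0)) (map (g2 n x t) [0..<2*n])
   = map (\<lambda>r. g2 n x t r - g2 n x t (n + r)) [0..<n]"
  apply (subst affine_mkL)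
   apply simp
  apply (rule nth_equalityI)
   apply simp
  apply (simp only: length_map length_upt nth_map nth_upt)
  apply (simp only: layer3_entry)
  done

definition phiL :: "nat \<Rightarrow> layer list" where
  "phiL n = [mkL (2+2*n) 2 (W1 n) (b1 n), mkL (2*n) (2+2*n) (W2 n) (\<lambda>_. 0), mkL n (2*n) (W3 n) (\<lambda>_. 0)]"

lemma phiL_eval: "mlp (phiL n) [x, t] = map (\<lambda>r. g2 n x t r - g2 n x t (n + r)) [0..<n]"
  unfolding phiL_def by (simp only: mlp.simps layer1 layer2 layer3)

lemma phiL_ffn: "ffn 2 n (phiL n)"
  unfolding phiL_def ffn_def by (simp add: mkL_def)

lemma phiL_val:
  assumes "\<bar>x\<bar> \<le> 1" "j < n" "k < n"
  shows "mlp (phiL n) [x, real j] ! k = (if j = k then x else 0)"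
proof -
  have e: "mlp (phiL n) [x, real j] ! k = relu (x - 2 * \<bar>real j - real k\<bar>) - relu (- x - 2 * \<bar>real j - real k\<bar>)"
    using assms(3) unfolding phiL_eval
    by (simp add: g2_def sg_def kk_def relu_def max_def abs_if algebra_simps)
  show ?thesis
  proof (cases "j = k")
    case True then show ?thesis using e by (simp add: relu_def max_def)
  next
    case False
    then have "\<bar>real j - real k\<bar> \<ge> 1" by linarith
    then have a: "x - 2 * \<bar>real j - real k\<bar> \<le> 0" "- x - 2 * \<bar>real j - real k\<bar> \<le> 0"
      using assms(1) by (auto simp: abs_le_iff)
    have "relu (x - 2 * \<bar>real j - real k\<bar>) = 0" "relu (- x - 2 * \<bar>real j - real k\<bar>) = 0"
      using a unfolding relu_def by simp_all
    then show ?thesis using e False by simp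
  qed
qed

lemma rows_orth:
  fixes V :: "nat \<Rightarrow> nat \<Rightarrow> real"
  assumes "\<forall>j<n. \<forall>k<n. (\<Sum>i<n. V i j * V i k) = (if j = k then 1 else 0)"
  shows "\<forall>i<n. \<forall>j<n. (\<Sum>k<n. V i k * V j k) = (if i = j then 1 else 0)"
proof -
  define A where "A = mat n n (\<lambda>(i,j). V j i)"
  define B where "B = mat n n (\<lambda>(i,j). V i j)"
  have AB: "A * B = 1\<^sub>m n"
  proof (rule eq_matI)
    fix j k assume j: "j < dim_row (1\<^sub>m n)" and k: "k < dim_col (1\<^sub>m n)"
    have "(A * B) $$ (j,k) = (\<Sum>i<n. V i j * V i k)"
      using j k unfolding A_def B_def
      by (simp add: scalar_prod_def row_def col_def atLeast0LessThan)
    then show "(A * B) $$ (j,k) = 1\<^sub>m n $$ (j,k)" using assms j k by simp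
  qed (auto simp: A_def B_def)
  have BA: "B * A = 1\<^sub>m n"
    by (rule mat_mult_left_right_inverse[OF _ _ AB]) (auto simp: A_def B_def)
  show ?thesis
  proof (intro allI impI)
    fix i j assume i: "i < n" and j: "j < n"
    have "(B * A) $$ (i,j) = (\<Sum>k<n. V i k * V j k)"
      using i j unfolding A_def B_def
      by (simp add: scalar_prod_def row_def col_def atLeast0LessThan)
    then show "(\<Sum>k<n. V i k * V j k) = (if i = j then 1 else 0)" using BA i j by simp
  qed
qed

lemma orth_collapse:
  fixes V :: "nat \<Rightarrow> nat \<Rightarrow> real"
  assumes R: "\<forall>i<n. \<forall>j<n. (\<Sum>k<n. V i k * V j k) = (if i = j then 1 else 0)" and j: "j < n"
  shows "(\<Sum>b<n. V j b * (\<Sum>p<n. V p b * f p)) = f j"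
proof -
  have "(\<Sum>b<n. V j b * (\<Sum>p<n. V p b * f p)) = (\<Sum>b<n. \<Sum>p<n. V j b * V p b * f p)"
    by (simp add: sum_distrib_left mult.assoc)
  also have "... = (\<Sum>p<n. \<Sum>b<n. V j b * V p b * f p)" by (rule sum.swap)
  also have "... = (\<Sum>p<n. (\<Sum>b<n. V j b * V p b) * f p)" by (simp add: sum_distrib_right)
  also have "... = (\<Sum>p<n. if p = j then f p else 0)"
    using R j by (intro sum.cong) auto
  also have "... = f j" using j by (simp add: delta1)
  finally show ?thesis .
qed

lemma mult_delta: "y * (if P then (c::real) else 0) = (if P then y * c else 0)" by simp

lemma semb:
  assumes bound: "\<forall>j<n. \<bar>V v j\<bar> \<le> 1"
  shows "struct_emb n E V lam (phiL n) n (\<lambda>j. real j - lam j) [idL n] (\<lambda>_. replicate n 0) [idL n] v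
     = map (V v) [0..<n]"
proof -
  have inner: "map (\<lambda>k. \<Sum>j<n. mlp (phiL n) [V v j, lam j + (real j - lam j)] ! k) [0..<n] = map (V v) [0..<n]"
  proof (rule nth_equalityI)
    fix k assume "k < length (map (\<lambda>k. \<Sum>j<n. mlp (phiL n) [V v j, lam j + (real j - lam j)] ! k) [0..<n])"
    then have k: "k < n" by simp
    have "(\<Sum>j<n. mlp (phiL n) [V v j, lam j + (real j - lam j)] ! k) = (\<Sum>j<n. if j = k then V v j else 0)"
      using bound k by (intro sum.cong) (auto simp: phiL_val)
    also have "... = V v k" using k by (simp add: delta1)
    finally show "map (\<lambda>k. \<Sum>j<n. mlp (phiL n) [V v j, lam j + (real j - lam j)] ! k) [0..<n] ! k = map (V v) [0..<n] ! k"
      using k by simp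
  qed simp
  have z: "map2 (+) (replicate n 0) (map (V v) [0..<n]) = map (V v) [0..<n]"
    by (rule nth_equalityI) auto
  show ?thesis
    unfolding struct_emb_def lpe_def inner
    by (simp add: affine_idL z del: upt_Suc)
qed

lemma params_ok: "lpe_params_ok n (phiL n) n [idL n] n (\<lambda>_. replicate n 0) [idL n]"
  unfolding lpe_params_ok_def using phiL_ffn by (simp add: ffn_def idL_def mkL_def)

lemma suff:
  assumes bound: "\<forall>v<n. \<forall>j<n. \<bar>V v j\<bar> \<le> 1"
    and I: "Ident n (\<lambda>v. map (V v) [0..<n])"
  shows "sufficiently_identifying_lpe Ident n E V lam"
  unfolding sufficiently_identifying_lpe_def
proof (rule exI[of _ n], rule exI[of _ "\<lambda>v. map (V v) [0..<n]"], intro conjI allI impI)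
  show "length (map (V i) [0..<n]) = n" for i by simp
  show "Ident n (\<lambda>v. map (V v) [0..<n])" by (rule I)
  fix e :: real assume e: "e > 0"
  have "frob_dist n n (\<lambda>v. map (V v) [0..<n])
      (struct_emb n E V lam (phiL n) n (\<lambda>j. real j - lam j) [idL n] (\<lambda>_. replicate n 0) [idL n]) = 0"
    unfolding frob_dist_def using bound by (simp add: semb del: upt_Suc)
  then show "\<exists>phi dphi eps rho de emb_deg F. lpe_params_ok n phi dphi rho de emb_deg F \<and>
      frob_dist n n (\<lambda>v. map (V v) [0..<n]) (struct_emb n E V lam phi dphi eps rho emb_deg F) < e"
    using params_ok[of n] e
    by (intro exI[of _ "phiL n"] exI[of _ n] exI[of _ "\<lambda>j. real j - lam j"] exI[of _ "[idL n]"]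
        exI[of _ n] exI[of _ "\<lambda>_. replicate n 0"] exI[of _ "[idL n]"]) simp
qed

lemma max_is:
  fixes f :: "nat \<Rightarrow> real"
  assumes "i < n" "f i = c" "\<forall>k<n. f k \<le> c"
  shows "(MAX k\<in>{..<n}. f k) = c"
  using assms by (intro Max_eqI) auto

lemma proj_id: "a < n \<Longrightarrow> (\<Sum>b<n. map (V i) [0..<n] ! b * (if b = a then 1 else 0)) = (V i a :: real)"
proof -
  assume a: "a < n"
  have "(\<Sum>b<n. map (V i) [0..<n] ! b * (if b = a then 1 else 0)) = (\<Sum>b<n. if b = a then V i b else 0)"
    by (intro sum.cong) auto
  also have "... = V i a" using a by (simp add: delta1)
  finally show ?thesis .
qed

lemma proj_id2: "a < (n::nat) \<Longrightarrow> (\<Sum>b<n. f b * (if b = a then 1 else 0)) = (f a :: real)"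
proof -
  assume a: "a < n"
  have "(\<Sum>b<n. f b * (if b = a then 1 else 0)) = (\<Sum>b<n. if b = a then f b else 0)"
    by (intro sum.cong) auto
  also have "... = f a" using a by (rule delta1)
  finally show ?thesis .
qed

lemma node_id:
  fixes V :: "nat \<Rightarrow> nat \<Rightarrow> real"
  assumes R: "\<forall>i<n. \<forall>j<n. (\<Sum>k<n. V i k * V j k) = (if i = j then 1 else 0)" and dk: "dk > 0"
  shows "node_identifying n n dk (\<lambda>v. map (V v) [0..<n])"
  unfolding node_identifying_def
proof (intro exI allI impI)
  define D :: "nat \<Rightarrow> nat \<Rightarrow> real" where "D = (\<lambda>b a. if b = a then 1 else 0)"
  let ?P = "\<lambda>v. map (V v) [0..<n]"
  have sc: "attn_scores n dk ?P D D i j = (if i = j then 1 / sqrt dk else 0)" if "i < n" "j < n" for i j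
  proof -
    have "attn_scores n dk ?P D D i j = (1 / sqrt dk) * (\<Sum>a<n. V i a * V j a)"
      unfolding attn_scores_def D_def by (simp add: proj_id2)
    then show ?thesis using R that by simp
  qed
  have pos: "1 / sqrt dk > 0" using dk by simp
  fix i j assume i: "i < n" and j: "j < n"
  have m: "(MAX k\<in>{..<n}. attn_scores n dk ?P D D i k) = 1 / sqrt dk"
    by (rule max_is[OF i]) (use sc i pos in auto)
  show "attn_scores n dk ?P D D i j = (MAX k\<in>{..<n}. attn_scores n dk ?P D D i k) \<longleftrightarrow> i = j"
    unfolding m using sc[OF i j] pos by auto
qed

lemma adj_id:
  fixes V :: "nat \<Rightarrow> nat \<Rightarrow> real"
  assumes R: "\<forall>i<n. \<forall>j<n. (\<Sum>k<n. V i k * V j k) = (if i = j then 1 else 0)" and dk: "dk > 0"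
    and G: "simple_graph_no_isolated n E"
  shows "adjacency_identifying n E n dk (\<lambda>v. map (V v) [0..<n])"
  unfolding adjacency_identifying_def
proof (intro exI allI impI)
  define D :: "nat \<Rightarrow> nat \<Rightarrow> real" where "D = (\<lambda>b a. if b = a then 1 else 0)"
  define K :: "nat \<Rightarrow> nat \<Rightarrow> real" where "K = (\<lambda>b a. \<Sum>p<n. V p b * (\<Sum>q<n. V q a * adj E p q))"
  let ?P = "\<lambda>v. map (V v) [0..<n]"
  have sym: "adj E i j = adj E j i" if "i < n" "j < n" for i j
    using G that unfolding simple_graph_no_isolated_def adj_def by auto
  have sc: "attn_scores n dk ?P D K i j = (1 / sqrt dk) * adj E i j" if i: "i < n" and j: "j < n" for i j
  proof -
    have "(\<Sum>b<n. ?P j ! b * K b a) = (\<Sum>q<n. V q a * adj E j q)" for a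
    proof -
      have "(\<Sum>b<n. ?P j ! b * K b a) = (\<Sum>b<n. V j b * (\<Sum>p<n. V p b * (\<Sum>q<n. V q a * adj E p q)))"
        unfolding K_def by (intro sum.cong) auto
      also have "... = (\<Sum>q<n. V q a * adj E j q)" by (rule orth_collapse[OF R j])
      finally show ?thesis .
    qed
    then have "attn_scores n dk ?P D K i j = (1 / sqrt dk) * (\<Sum>a<n. V i a * (\<Sum>q<n. V q a * adj E j q))"
      unfolding attn_scores_def D_def by (simp add: proj_id2)
    also have "... = (1 / sqrt dk) * adj E j i" by (simp only: orth_collapse[OF R i])
    finally show ?thesis using sym[OF i j] by simp
  qed
  have pos: "1 / sqrt dk > 0" using dk by simp
  fix i j assume i: "i < n" and j: "j < n"
  obtain j0 where j0: "j0 < n" "E i j0" using G i unfolding simple_graph_no_isolated_def by auto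
  have a01: "adj E i k = 1 \<or> adj E i k = 0" for k unfolding adj_def by auto
  have m: "(MAX k\<in>{..<n}. attn_scores n dk ?P D K i k) = 1 / sqrt dk"
  proof (rule max_is[OF j0(1)])
    show "attn_scores n dk ?P D K i j0 = 1 / sqrt dk" using sc[OF i j0(1)] j0 by (simp add: adj_def)
    show "\<forall>k<n. attn_scores n dk ?P D K i k \<le> 1 / sqrt dk"
    proof (intro allI impI)
      fix k assume k: "k < n"
      show "attn_scores n dk ?P D K i k \<le> 1 / sqrt dk"
        using sc[OF i k] a01[of k] pos by auto
    qed
  qed
  show "attn_scores n dk ?P D K i j = (MAX k\<in>{..<n}. attn_scores n dk ?P D K i k) \<longleftrightarrow> adj E i j = 1"
    unfolding m sc[OF i j] using pos by auto
qed

theorem theorem4p1: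
  fixes n :: nat and E :: "nat \<Rightarrow> nat \<Rightarrow> bool"
    and V :: "nat \<Rightarrow> nat \<Rightarrow> real" and lam :: "nat \<Rightarrow> real" and dk :: real
  assumes "simple_graph_no_isolated n E"
    and "laplacian_eigendecomp n E V lam"
    and "dk > 0"
  shows "sufficiently_identifying_lpe (\<lambda>d P. node_identifying n d dk P) n E V lam
       \<and> sufficiently_identifying_lpe (\<lambda>d P. adjacency_identifying n E d dk P) n E V lam"
proof -
  have C: "\<forall>j<n. \<forall>k<n. (\<Sum>i<n. V i j * V i k) = (if j = k then 1 else 0)"
    using assms(2) unfolding laplacian_eigendecomp_def by blast
  have R: "\<forall>i<n. \<forall>j<n. (\<Sum>k<n. V i k * V j k) = (if i = j then 1 else 0)"
    by (rule rows_orth[OF C])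
  have bound: "\<forall>v<n. \<forall>j<n. \<bar>V v j\<bar> \<le> 1"
  proof (intro allI impI)
    fix v j assume v: "v < n" and j: "j < n"
    have "V v j * V v j \<le> (\<Sum>i<n. V i j * V i j)"
      using v by (intro member_le_sum) auto
    then have "(V v j)^2 \<le> 1" using C j by (simp add: power2_eq_square)
    then show "\<bar>V v j\<bar> \<le> 1" by (simp add: abs_square_le_1)
  qed
  show ?thesis
    using suff[OF bound, of "\<lambda>d P. node_identifying n d dk P"]
      suff[OF bound, of "\<lambda>d P. adjacency_identifying n E d dk P"]
      node_id[OF R assms(3)] adj_id[OF R assms(3) assms(1)] by blast
qed

end
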